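(* Let $n\ge1$ and $\mathbf{P}_A,\mathbf{P}_B,\mathbf{Q}_A,\mathbf{Q}_B\in\mathbb{R}^{n\times n}$ be symmetric positive definite; $\mathbf{C}_A=\mathbf{P}_A+\mathbf{Q}_A$, $\mathbf{C}_B=\mathbf{P}_B+\mathbf{Q}_B$. Let $\mathbf{K}=(\mathbf{K}_A,\mathbf{K}_B)$ satisfy $\mathbf{K}_A+\mathbf{K}_B=\mathbf{I}$ and let $\mathbf{B}_F$ be a symmetric positive definite matrix such that $\mathbf{B}_F\succeq\mathbf{C}_F(\mathbf{K},\mathbf{P}_{AB})$ for all $\mathbf{P}_{AB}\in\mathcal{A}_{\mathrm{Split}}$. Then $\mathcal{V}^*\subseteq\mathcal{E}(\mathbf{B}_F)$.
   Context: $\mathcal{A}_{\mathrm{Split}}=\{\mathbf{M}\in\mathbb{R}^{n\times n} : \begin{bmatrix}\mathbf{P}_A & \mathbf{M}\\ \mathbf{M}^\intercal & \mathbf{P}_B\end{bmatrix}\succeq 0\}$. $\mathbf{C}_F(\mathbf{K},\mathbf{P}_{AB})=\mathbf{K}_A\mathbf{C}_A\mathbf{K}_A^\intercal+\mathbf{K}_A\mathbf{P}_{AB}\mathbf{K}_B^\intercal+\mathbf{K}_B\mathbf{P}_{AB}^\intercal\mathbf{K}_A^\intercal+\mathbf{K}_B\mathbf{C}_B\mathbf{K}_B^\intercal$. For $\mathbf{P}_{AB}\in\mathcal{A}_{\mathrm{Split}}$ let $\mathbf{R}=\mathbf{C}_A+\mathbf{C}_B-\mathbf{P}_{AB}-\mathbf{P}_{AB}^\intercal$,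 $\mathbf{K}_A^*=(\mathbf{C}_B-\mathbf{P}_{AB}^\intercal)\mathbf{R}^{-1}$, $\mathbf{K}^*=(\mathbf{K}_A^*,\mathbf{I}-\mathbf{K}_A^* )$ and $\mathbf{C}_F^*(\mathbf{P}_{AB})=\mathbf{C}_F(\mathbf{K}^*,\mathbf{P}_{AB})$. For a symmetric positive definite $\mathbf{P}$, $\mathcal{E}(\mathbf{P})=\{\mathbf{x}\in\mathbb{R}^n:\mathbf{x}^\intercal\mathbf{P}^{-1}\mathbf{x}\le1\}$. Define $\mathcal{V}^*=\bigcup_{\mathbf{P}_{AB}\in\mathcal{A}_{\mathrm{Split}}}\mathcal{E}(\mathbf{C}_F^*(\mathbf{P}_{AB}))$. *)

theory Defs
  imports "HOL-Analysis.Analysis"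
begin

definition psd :: "real^'n^'n \<Rightarrow> bool" where
  "psd M \<longleftrightarrow> transpose M = M \<and> (\<forall>x. 0 \<le> x \<bullet> (M *v x))"

definition spd :: "real^'n^'n \<Rightarrow> bool" where
  "spd M \<longleftrightarrow> transpose M = M \<and> (\<forall>x. x \<noteq> 0 \<longrightarrow> 0 < x \<bullet> (M *v x))"

definition loewner_ge :: "real^'n^'n \<Rightarrow> real^'n^'n \<Rightarrow> bool" where
  "loewner_ge A B \<longleftrightarrow> psd (A - B)"

text \<open>The 2n x 2n block matrix [[A, M], [M^T, B]], indexed by 'n + 'n.\<close>
definition block2 :: "real^'n^'n \<Rightarrow> real^'n^'n \<Rightarrow> real^'n^'n \<Rightarrow> real^('n + 'n)^('n + 'n)" where
  "block2 A M B = (\<chi> i j. case i of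
        Inl a \<Rightarrow> (case j of Inl b \<Rightarrow> A $ a $ b | Inr b \<Rightarrow> M $ a $ b)
      | Inr a \<Rightarrow> (case j of Inl b \<Rightarrow> M $ b $ a | Inr b \<Rightarrow> B $ a $ b))"

definition A_Split :: "real^'n^'n \<Rightarrow> real^'n^'n \<Rightarrow> (real^'n^'n) set" where
  "A_Split PA PB = {M. psd (block2 PA M PB)}"

definition C_F :: "real^'n^'n \<Rightarrow> real^'n^'n \<Rightarrow> real^'n^'n \<Rightarrow> real^'n^'n \<Rightarrow> real^'n^'n \<Rightarrow> real^'n^'n" where
  "C_F CA CB KA KB PAB =
     KA ** CA ** transpose KA + KA ** PAB ** transpose KB
     + KB ** transpose PAB ** transpose KA + KB ** CB ** transpose KB"

definition C_F_star :: "real^'n^'n \<Rightarrow> real^'n^'n \<Rightarrow> real^'n^'n \<Rightarrow> real^'n^'n" where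
  "C_F_star CA CB PAB =
     (let R = CA + CB - PAB - transpose PAB;
          KA = (CB - transpose PAB) ** matrix_inv R
      in C_F CA CB KA (mat 1 - KA) PAB)"

definition ellipsoid :: "real^'n^'n \<Rightarrow> (real^'n) set" where
  "ellipsoid P = {x. x \<bullet> (matrix_inv P *v x) \<le> 1}"

definition V_star :: "real^'n^'n \<Rightarrow> real^'n^'n \<Rightarrow> real^'n^'n \<Rightarrow> real^'n^'n \<Rightarrow> (real^'n) set" where
  "V_star PA PB CA CB = (\<Union>PAB \<in> A_Split PA PB. ellipsoid (C_F_star CA CB PAB))"

end

theory Submission
  imports Defs
begin

lemma mm_add_r: "((A::real^'n^'n) + B) ** C = A ** C + B ** C"
  by (vector matrix_matrix_mult_def sum.distrib[symmetric] field_simps)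
lemma mm_diff_l: "(A::real^'n^'n) ** (B - C) = A ** B - A ** C"
  by (vector matrix_matrix_mult_def sum_subtractf[symmetric] field_simps)
lemma mm_diff_r: "((A::real^'n^'n) - B) ** C = A ** C - B ** C"
  by (vector matrix_matrix_mult_def sum_subtractf[symmetric] field_simps)
lemma tr_add: "transpose ((A::real^'n^'n) + B) = transpose A + transpose B"
  by (simp add: transpose_def vec_eq_iff)
lemma tr_diff: "transpose ((A::real^'n^'n) - B) = transpose A - transpose B"
  by (simp add: transpose_def vec_eq_iff)

lemmas msimps = matrix_add_ldistrib mm_add_r mm_diff_l mm_diff_r tr_add tr_diff
   matrix_transpose_mul matrix_mul_assoc

lemma CF_expand:
  fixes S T X P :: "real^'n^'n"
  assumes "transpose T = T"
  shows "C_F S T X (mat 1 - X) P = X ** (S + T - P - transpose P) ** transpose X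
     - X ** transpose (T - transpose P) - (T - transpose P) ** transpose X + T"
  using assms by (simp add: C_F_def msimps algebra_simps)

lemma sumP: "sum (g :: 'a + 'b \<Rightarrow> real) (UNIV::('a::finite + 'b::finite) set) = (\<Sum>i\<in>UNIV. g (Inl i)) + (\<Sum>i\<in>UNIV. g (Inr i))"
  using sum.Plus[of "UNIV::'a set" "UNIV::'b set" g] by (simp add: o_def)

lemma block_quad:
  fixes A M B :: "real^'n^'n" and a b :: "real^'n"
  shows "((\<chi> i. case i of Inl j \<Rightarrow> a$j | Inr j \<Rightarrow> b$j) :: real^('n+'n)) \<bullet>
     (block2 A M B *v (\<chi> i. case i of Inl j \<Rightarrow> a$j | Inr j \<Rightarrow> b$j))
   = a \<bullet> (A *v a) + 2 * (a \<bullet> (M *v b)) + b \<bullet> (B *v b)"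
proof -
  have U: "(UNIV :: ('n+'n) set) = UNIV <+> UNIV" by simp
  have "b \<bullet> (transpose M *v a) = a \<bullet> (M *v b)"
    by (metis dot_lmul_matrix inner_commute transpose_matrix_vector)
  moreover have "b \<bullet> (transpose M *v a) = (\<Sum>i\<in>UNIV. b$i * (\<Sum>j\<in>UNIV. M$j$i * a$j))"
    by (simp add: inner_vec_def matrix_vector_mult_def transpose_def)
  ultimately show ?thesis
    apply (simp add: inner_vec_def matrix_vector_mult_def block2_def)
    apply (simp add: sumP algebra_simps sum.distrib)
    done
qed

lemma dot_tr: "(v::real^'n) \<bullet> (X *v u) = (transpose X *v v) \<bullet> u"
  by (simp add: dot_lmul_matrix)

lemma inv_pd:
  fixes M :: "real^'n^'n"
  assumes "\<forall>x. x \<noteq> 0 \<longrightarrow> 0 < x \<bullet> (M *v x)"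
  shows "M ** matrix_inv M = mat 1 \<and> matrix_inv M ** M = mat 1"
proof -
  have "\<forall>x. M *v x = 0 \<longrightarrow> x = 0" using assms by force
  then obtain B where "B ** M = mat 1" using matrix_left_invertible_ker by blast
  then have "invertible M" using invertible_left_inverse by blast
  then show ?thesis unfolding invertible_def matrix_inv_def by (rule someI_ex)
qed

lemma CF_quad:
  fixes S T X Y P :: "real^'n^'n"
  shows "v \<bullet> (C_F S T X Y P *v v) = (transpose X *v v) \<bullet> (S *v (transpose X *v v))
    + 2 * ((transpose X *v v) \<bullet> (P *v (transpose Y *v v)))
    + (transpose Y *v v) \<bullet> (T *v (transpose Y *v v))"
proof -
  have e: "v \<bullet> ((X ** Q ** transpose Z) *v v) = (transpose X *v v) \<bullet> (Q *v (transpose Z *v v))"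
    for X Q Z :: "real^'n^'n"
    by (metis dot_tr matrix_vector_mul_assoc)
  have f: "(transpose Y *v v) \<bullet> (transpose P *v (transpose X *v v)) = (transpose X *v v) \<bullet> (P *v (transpose Y *v v))"
    by (metis dot_tr inner_commute)
  show ?thesis
    by (simp only: C_F_def matrix_vector_mult_add_rdistrib inner_add_right e f)
qed

lemma spd_nonneg: "spd M \<Longrightarrow> 0 \<le> x \<bullet> (M *v x)"
  unfolding spd_def by (cases "x = 0") (auto intro: less_imp_le)

lemma block_nonneg:
  assumes "P \<in> A_Split PA PB"
  shows "0 \<le> a \<bullet> (PA *v a) + 2 * (a \<bullet> (P *v b)) + b \<bullet> (PB *v b)"
  using assms unfolding A_Split_def psd_def
  by (metis (no_types, lifting) block_quad mem_Collect_eq)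

lemma CF_pd:
  fixes PA PB QA QB X Y P :: "real^'n^'n"
  assumes "spd QA" "spd QB" "X + Y = mat 1" "P \<in> A_Split PA PB" "v \<noteq> 0"
  shows "0 < v \<bullet> (C_F (PA + QA) (PB + QB) X Y P *v v)"
proof -
  define a where "a = transpose X *v v"
  define b where "b = transpose Y *v v"
  have ab: "a + b = v" unfolding a_def b_def
    by (metis assms(3) matrix_vector_mult_add_rdistrib matrix_vector_mul_lid tr_add transpose_mat)
  have "0 < a \<bullet> (QA *v a) + b \<bullet> (QB *v b)"
  proof (cases "a = 0")
    case True
    then have "b \<noteq> 0" using ab assms(5) by auto
    then show ?thesis using True assms(2) unfolding spd_def by simp
  next
    case False
    then show ?thesis using spd_nonneg[OF assms(2), of b] assms(1) unfolding spd_def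
      by (smt (verit))
  qed
  moreover have "0 \<le> a \<bullet> (PA *v a) + 2 * (a \<bullet> (P *v b)) + b \<bullet> (PB *v b)"
    using block_nonneg[OF assms(4)] .
  ultimately show ?thesis
    unfolding CF_quad a_def[symmetric] b_def[symmetric]
    by (simp add: matrix_vector_mult_add_rdistrib inner_add_right)
qed

lemma R_pd:
  fixes PA PB QA QB P :: "real^'n^'n"
  assumes "spd QA" "spd QB" "P \<in> A_Split PA PB" "v \<noteq> 0"
  shows "0 < v \<bullet> ((PA + QA + (PB + QB) - P - transpose P) *v v)"
proof -
  have "0 \<le> v \<bullet> (PA *v v) + 2 * (v \<bullet> (P *v (-v))) + (-v) \<bullet> (PB *v (-v))"
    using block_nonneg[OF assms(3)] .
  moreover have "v \<bullet> (transpose P *v v) = v \<bullet> (P *v v)"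
    by (metis dot_tr transpose_transpose inner_commute)
  moreover have "\<And>M::real^'n^'n. M *v (-v) = -(M *v v)"
    by (metis add_eq_0_iff matrix_vector_right_distrib matrix_vector_mult_0_right)
  moreover have "0 < v \<bullet> (QA *v v)" using assms(1,4) unfolding spd_def by simp
  moreover have "0 \<le> v \<bullet> (QB *v v)" using spd_nonneg[OF assms(2)] .
  ultimately show ?thesis
    by (simp add: matrix_vector_mult_add_rdistrib matrix_vector_mult_diff_rdistrib
        inner_add_right inner_diff_right matrix_vector_right_distrib)
qed

lemma CF_sym:
  fixes S T X Y P :: "real^'n^'n"
  assumes "transpose S = S" "transpose T = T"
  shows "transpose (C_F S T X Y P) = C_F S T X Y P"
  using assms by (simp add: C_F_def msimps algebra_simps)

lemma var_ineq:
  fixes A B :: "real^'n^'n"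
  assumes "transpose A = A" "\<forall>v. 0 \<le> v \<bullet> (A *v v)"
    "A ** matrix_inv A = mat 1" "B ** matrix_inv B = mat 1"
    "\<forall>v. v \<bullet> (A *v v) \<le> v \<bullet> (B *v v)"
  shows "x \<bullet> (matrix_inv B *v x) \<le> x \<bullet> (matrix_inv A *v x)"
proof -
  define y where "y = matrix_inv B *v x"
  define z where "z = matrix_inv A *v x"
  have By: "B *v y = x" unfolding y_def using assms(4) by (simp add: matrix_vector_mul_assoc)
  have Az: "A *v z = x" unfolding z_def using assms(3) by (simp add: matrix_vector_mul_assoc)
  have zAy: "z \<bullet> (A *v y) = x \<bullet> y"
    by (metis Az assms(1) dot_tr)
  have "0 \<le> (y - z) \<bullet> (A *v (y - z))" using assms(2) by blast
  also have "\<dots> = y \<bullet> (A *v y) - 2 * (x \<bullet> y) + z \<bullet> x"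
    by (simp add: matrix_vector_mult_diff_distrib inner_diff_left inner_diff_right Az zAy inner_commute)
  finally have 1: "2 * (x \<bullet> y) - y \<bullet> (A *v y) \<le> z \<bullet> x" by simp
  have "y \<bullet> (A *v y) \<le> y \<bullet> x" using assms(5) By by metis
  with 1 show ?thesis unfolding y_def[symmetric] z_def[symmetric]
    by (simp add: inner_commute)
qed

lemma opt_abs:
  fixes R G T X Ri :: "real^'n^'n"
  assumes "transpose R = R" "R ** Ri = mat 1" "Ri ** R = mat 1"
  shows "(X ** R ** transpose X - X ** transpose G - G ** transpose X + T)
   - ((G ** Ri) ** R ** transpose (G ** Ri) - (G ** Ri) ** transpose G - G ** transpose (G ** Ri) + T)
   = (X - G ** Ri) ** R ** transpose (X - G ** Ri)"
proof -
  have a1: "A ** Ri ** R = A" for A :: "real^'n^'n" by (metis matrix_mul_assoc matrix_mul_rid assms(3))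
  have a2: "A ** R ** Ri = A" for A :: "real^'n^'n" by (metis matrix_mul_assoc matrix_mul_rid assms(2))
  have "transpose Ri = transpose Ri ** (R ** Ri)" using assms(2) by simp
  also have "\<dots> = transpose (transpose R ** Ri) ** Ri" by (simp add: matrix_mul_assoc matrix_transpose_mul)
  also have "\<dots> = Ri" using assms by simp
  finally have tRi: "transpose Ri = Ri" .
  show ?thesis by (simp add: msimps tRi a1 a2 algebra_simps)
qed

theorem lemma2:
  fixes PA PB QA QB KA KB BF :: "real^'n^'n"
  assumes "spd PA" and "spd PB" and "spd QA" and "spd QB"
    and "KA + KB = mat 1"
    and "spd BF"
    and "\<forall>PAB \<in> A_Split PA PB. loewner_ge BF (C_F (PA + QA) (PB + QB) KA KB PAB)"
  shows "V_star PA PB (PA + QA) (PB + QB) \<subseteq> ellipsoid BF"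
proof
  fix x assume "x \<in> V_star PA PB (PA + QA) (PB + QB)"
  then obtain P where P: "P \<in> A_Split PA PB" and xe: "x \<in> ellipsoid (C_F_star (PA + QA) (PB + QB) P)"
    unfolding V_star_def by blast
  define S where "S = PA + QA"
  define T where "T = PB + QB"
  define R where "R = S + T - P - transpose P"
  define G where "G = T - transpose P"
  define K where "K = G ** matrix_inv R"
  have sS: "transpose S = S" using assms(1,3) unfolding S_def spd_def by (simp add: tr_add)
  have sT: "transpose T = T" using assms(2,4) unfolding T_def spd_def by (simp add: tr_add)
  have sR: "transpose R = R" unfolding R_def using sS sT by (simp add: tr_add tr_diff)
  have Rinv: "R ** matrix_inv R = mat 1 \<and> matrix_inv R ** R = mat 1"
    using inv_pd R_pd[OF assms(3,4) P] unfolding R_def S_def T_def by blast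
  have Cs: "C_F_star S T P = C_F S T K (mat 1 - K) P"
    unfolding C_F_star_def Let_def K_def G_def R_def by simp
  have KB: "KB = mat 1 - KA" using assms(5) by (metis add_diff_cancel_left')
  have diff: "C_F S T KA KB P - C_F_star S T P = (KA - K) ** R ** transpose (KA - K)"
    unfolding Cs KB CF_expand[OF sT] R_def[symmetric] G_def[symmetric] K_def
    using opt_abs[OF sR] Rinv by blast
  have Cpd: "\<forall>v. v \<noteq> 0 \<longrightarrow> 0 < v \<bullet> (C_F_star S T P *v v)"
  proof -
    have "\<forall>v. v \<noteq> 0 \<longrightarrow> 0 < v \<bullet> (C_F S T K (mat 1 - K) P *v v)"
      unfolding S_def T_def using CF_pd[OF assms(3,4) _ P] by simp
    then show ?thesis unfolding Cs .
  qed
  have Cinv: "C_F_star S T P ** matrix_inv (C_F_star S T P) = mat 1"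
    using inv_pd[OF Cpd] by blast
  have Binv: "BF ** matrix_inv BF = mat 1"
    using inv_pd assms(6) unfolding spd_def by blast
  have Csym: "transpose (C_F_star S T P) = C_F_star S T P"
    unfolding Cs using CF_sym[OF sS sT] by blast
  have Cnn: "\<forall>v. 0 \<le> v \<bullet> (C_F_star S T P *v v)"
    using Cpd by (metis inner_zero_left less_eq_real_def matrix_vector_mult_0_right)
  have le: "v \<bullet> (C_F_star S T P *v v) \<le> v \<bullet> (BF *v v)" for v
  proof -
    have "0 \<le> v \<bullet> ((BF - C_F S T KA KB P) *v v)"
      using assms(7) P unfolding loewner_ge_def psd_def S_def T_def by blast
    moreover have "0 \<le> v \<bullet> ((C_F S T KA KB P - C_F_star S T P) *v v)"
    proof -
      have "v \<bullet> ((C_F S T KA KB P - C_F_star S T P) *v v)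
          = (transpose (KA - K) *v v) \<bullet> (R *v (transpose (KA - K) *v v))"
        unfolding diff by (metis dot_tr matrix_vector_mul_assoc)
      also have "\<dots> \<ge> 0"
        using R_pd[OF assms(3,4) P, of "transpose (KA - K) *v v"]
        unfolding R_def S_def T_def
        by (cases "transpose (KA - K) *v v = 0") auto
      finally show ?thesis .
    qed
    ultimately show ?thesis
      by (simp add: matrix_vector_mult_diff_rdistrib inner_diff_right)
  qed
  have "x \<bullet> (matrix_inv BF *v x) \<le> x \<bullet> (matrix_inv (C_F_star S T P) *v x)"
    by (rule var_ineq[OF Csym Cnn Cinv Binv]) (use le in blast)
  also have "\<dots> \<le> 1" using xe unfolding ellipsoid_def S_def T_def by simp
  finally show "x \<in> ellipsoid BF" unfolding ellipsoid_def by simp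
qed

end
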